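(* Let $n\geq 3$ and let $K\subset\mathbb{R}^n$ be an affine symmetric body of revolution admitting two different hyperplanes of revolution. Then $K$ is an ellipsoid.
   Context: A symmetric convex body $K\subset\mathbb{R}^n$ (compact, convex, nonempty interior, invariant under $x\mapsto-x$) is a symmetric body of revolution if it admits an axis of revolution: a 1-dimensional linear subspace $L$ such that every section of $K$ by an affine hyperplane $A$ orthogonal to $L$ is a closed Euclidean $(n-1)$-ball in $A$ centered at $A\cap L$ (possibly empty or a point); $L^\perp$ is the associated hyperplane of revolution. An affine symmetric body of revolution is a convex body linearly equivalent to a symmetric body of revolution; the images of an axis and its associated hyperplane under the linear equivalence are called an axis of revolution and associated hyperplane of revolution of it. An ellipsoid is a set affinely equivalent to a closed Euclidean unit ball. *)

theory Defs
  imports "HOL-Analysis.Analysis"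
begin

definition symmetric_convex_body :: "'a::euclidean_space set \<Rightarrow> bool" where
  "symmetric_convex_body K \<longleftrightarrow>
     compact K \<and> convex K \<and> interior K \<noteq> {} \<and> (\<forall>x\<in>K. - x \<in> K)"

definition axis_of_revolution :: "'a::euclidean_space set \<Rightarrow> 'a set \<Rightarrow> bool" where
  "axis_of_revolution K L \<longleftrightarrow>
     subspace L \<and> dim L = 1 \<and>
     (\<forall>c\<in>L. let A = (\<lambda>x. c + x) ` (orthogonal_comp L) in
        K \<inter> A = {} \<or> (\<exists>r\<ge>0. K \<inter> A = cball c r \<inter> A))"

definition symmetric_body_of_revolution :: "'a::euclidean_space set \<Rightarrow> bool" where
  "symmetric_body_of_revolution K \<longleftrightarrow>
     symmetric_convex_body K \<and> (\<exists>L. axis_of_revolution K L)"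

definition affine_symmetric_body_of_revolution :: "'a::euclidean_space set \<Rightarrow> bool" where
  "affine_symmetric_body_of_revolution K \<longleftrightarrow>
     (\<exists>(T::'a\<Rightarrow>'a) K0. linear T \<and> bij T \<and> symmetric_body_of_revolution K0 \<and> K = T ` K0)"

definition hyperplane_of_revolution :: "'a::euclidean_space set \<Rightarrow> 'a set \<Rightarrow> bool" where
  "hyperplane_of_revolution K H \<longleftrightarrow>
     (\<exists>(T::'a\<Rightarrow>'a) K0 L. linear T \<and> bij T \<and> symmetric_convex_body K0 \<and> axis_of_revolution K0 L
        \<and> K = T ` K0 \<and> H = T ` (orthogonal_comp L))"

definition ellipsoid :: "'a::euclidean_space set \<Rightarrow> bool" where
  "ellipsoid E \<longleftrightarrow>
     (\<exists>(T::'a\<Rightarrow>'a) a. linear T \<and> bij T \<and> E = (\<lambda>x. T x + a) ` cball 0 1)"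

end

theory Submission
  imports Defs
begin


lemma scale_eq:
  fixes a b r :: real
  assumes "a \<ge> 0" "b \<ge> 0" "r > 0" "\<And>t. t > 0 \<Longrightarrow> (t * a \<le> r \<longleftrightarrow> t * b \<le> r)"
  shows "a = b"
proof (rule ccontr)
  assume ne: "a \<noteq> b"
  define t where "t = 2 * r / (a + b)"
  have ab: "a + b > 0" using assms ne by linarith
  have t0: "t > 0" using ab assms by (simp add: t_def)
  have ta: "t * a = 2*r*a/(a+b)" "t * b = 2*r*b/(a+b)" by (simp_all add: t_def)
  show False
  proof (cases "a < b")
    case True
    have "t * a < r" unfolding ta using ab assms True by (simp add: divide_simps)
    moreover have "t * b > r" unfolding ta using ab assms True by (simp add: divide_simps)
    ultimately show False using assms(4)[OF t0] by linarith
  next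
    case False
    then have ba: "b < a" using ne by linarith
    have "t * b < r" unfolding ta using ab assms ba by (simp add: divide_simps)
    moreover have "t * a > r" unfolding ta using ab assms ba by (simp add: divide_simps)
    ultimately show False using assms(4)[OF t0] by linarith
  qed
qed



lemma exists_orth2:
  fixes e f :: "'a::euclidean_space"
  assumes "DIM('a) \<ge> 3"
  obtains w where "w \<noteq> 0" "w \<bullet> e = 0" "w \<bullet> f = 0"
proof -
  have "dim {e, f} \<le> card {e, f}" by (rule dim_le_card) (auto intro: span_base)
  also have "\<dots> \<le> 2" by (simp add: card_insert_if)
  finally have "dim {e,f} < DIM('a)" using assms by linarith
  then obtain x where "x \<noteq> 0" "\<And>y. y \<in> span {e,f} \<Longrightarrow> orthogonal x y"
    using orthogonal_to_subspace_exists by blast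
  then show ?thesis using that[of x] by (auto simp: orthogonal_def span_base)
qed

lemma half:
  fixes K :: "'a::euclidean_space set" and B :: "'a \<Rightarrow> 'a"
  assumes dim: "DIM('a) \<ge> 3" and e1: "norm e = 1" and lin: "linear B" and inj: "inj B"
  and rev: "\<And>x y. x \<in> K \<Longrightarrow> y \<bullet> e = x \<bullet> e \<Longrightarrow> norm y = norm x \<Longrightarrow> y \<in> K"
  and sec: "\<And>x. B x \<bullet> m = 0 \<Longrightarrow> (x \<in> K \<longleftrightarrow> norm (B x) \<le> r)"
  and r: "r > 0"
  and hyp: "\<exists>x. B x \<bullet> m = 0 \<and> x \<bullet> e \<noteq> 0"
  shows "\<exists>V \<kappa> \<beta>. \<kappa> > 0 \<and> (\<forall>x. (x \<bullet> e)^2 * V \<le> (norm x)^2 \<longrightarrow>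
            (x \<in> K \<longleftrightarrow> \<kappa> * ((norm x)^2 + \<beta> * (x \<bullet> e)^2) \<le> r^2))"
proof -
  define \<nu> where "\<nu> = adjoint B m"
  have nu: "B x \<bullet> m = x \<bullet> \<nu>" for x by (simp add: \<nu>_def adjoint_works[OF lin])
  have ee: "e \<bullet> e = 1" using e1 by (simp add: norm_eq_1)
  obtain x0 where x0: "x0 \<bullet> \<nu> = 0" "x0 \<bullet> e \<noteq> 0" using hyp nu by auto
  define v0 where "v0 = e - ((e \<bullet> \<nu>) / (\<nu> \<bullet> \<nu>)) *\<^sub>R \<nu>"
  have v0nu: "v0 \<bullet> \<nu> = 0"
    by (cases "\<nu> = 0") (auto simp: v0_def inner_diff_left)
  have v0e: "v0 \<bullet> e \<noteq> 0"
  proof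
    assume h: "v0 \<bullet> e = 0"
    have v0e': "v0 \<bullet> e = 1 - (e \<bullet> \<nu>)^2 / (\<nu> \<bullet> \<nu>)"
      by (simp add: v0_def inner_diff_left inner_diff_right ee power2_eq_square inner_commute)
    have nn: "\<nu> \<noteq> 0" using h v0e' by (cases "\<nu> = 0") auto
    then have pos: "\<nu> \<bullet> \<nu> > 0" by simp
    from h v0e' have "(e \<bullet> \<nu>)^2 / (\<nu> \<bullet> \<nu>) = 1" by linarith
    then have sq: "(e \<bullet> \<nu>)^2 = \<nu> \<bullet> \<nu>" using pos by (simp add: divide_eq_1_iff)
    have "(\<nu> - (\<nu> \<bullet> e) *\<^sub>R e) \<bullet> (\<nu> - (\<nu> \<bullet> e) *\<^sub>R e) = \<nu> \<bullet> \<nu> - (e \<bullet> \<nu>)^2"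
      by (simp add: inner_diff_left inner_diff_right ee inner_commute power2_eq_square)
    then have "\<nu> - (\<nu> \<bullet> e) *\<^sub>R e = 0" using sq by simp
    then have nue: "\<nu> = (\<nu> \<bullet> e) *\<^sub>R e" by simp
    have "x0 \<bullet> \<nu> = (\<nu> \<bullet> e) * (x0 \<bullet> e)" by (subst nue) simp
    then have "\<nu> \<bullet> e = 0" using x0 by simp
    then show False using nue nn by simp
  qed
  define v where "v = v0 /\<^sub>R (v0 \<bullet> e)"
  have ve: "v \<bullet> e = 1" using v0e by (simp add: v_def)
  have vnu: "v \<bullet> \<nu> = 0" using v0nu by (simp add: v_def)
  have vW: "w \<bullet> v = 0" if "w \<bullet> e = 0" "w \<bullet> \<nu> = 0" for w
    using that by (simp add: v_def v0_def inner_diff_right inner_commute)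
  obtain w0 where w0: "w0 \<noteq> 0" "w0 \<bullet> e = 0" "w0 \<bullet> \<nu> = 0" using exists_orth2[OF dim] by blast
  define wh where "wh = w0 /\<^sub>R norm w0"
  have wh: "norm wh = 1" "wh \<bullet> e = 0" "wh \<bullet> \<nu> = 0" "wh \<bullet> v = 0"
    using w0 vW[OF w0(2,3)] by (auto simp: wh_def)
  have Fq: "norm (B x) = norm (B y)"
    if "x \<bullet> \<nu> = 0" "y \<bullet> \<nu> = 0" "x \<bullet> e = y \<bullet> e" "norm x = norm y" for x y
  proof (rule scale_eq[OF norm_ge_zero norm_ge_zero r])
    fix t :: real assume t: "t > 0"
    have txn: "B (t *\<^sub>R x) \<bullet> m = 0" "B (t *\<^sub>R y) \<bullet> m = 0" using that by (simp_all add: nu)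
    have nx: "norm (B (t *\<^sub>R x)) = t * norm (B x)" "norm (B (t *\<^sub>R y)) = t * norm (B y)"
      using t by (simp_all add: linear_scale[OF lin])
    have "t *\<^sub>R x \<in> K \<longleftrightarrow> t *\<^sub>R y \<in> K"
      using rev[of "t *\<^sub>R x" "t *\<^sub>R y"] rev[of "t *\<^sub>R y" "t *\<^sub>R x"] that by auto
    then show "t * norm (B x) \<le> r \<longleftrightarrow> t * norm (B y) \<le> r"
      using sec[OF txn(1)] sec[OF txn(2)] nx by simp
  qed
  define Q where "Q x = (norm (B x))^2" for x
  have Qexp: "Q (a + b) = Q a + 2 * (B a \<bullet> B b) + Q b" for a b
    by (simp add: Q_def linear_add[OF lin] power2_norm_eq_inner inner_add_left inner_add_right inner_commute)
  have Qscale: "Q (c *\<^sub>R a) = c^2 * Q a" for c a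
    by (simp add: Q_def linear_scale[OF lin] power_mult_distrib)
  have orthB: "B w \<bullet> B v = 0" if "w \<bullet> e = 0" "w \<bullet> \<nu> = 0" for w
  proof -
    have "norm (B (w + v)) = norm (B (-w + v))"
      apply (rule Fq)
      using that vW[OF that] ve vnu
      by (auto simp: inner_add_left inner_minus_left norm_eq_sqrt_inner inner_add_right inner_diff_left inner_diff_right inner_commute)
    then have "Q (w + v) = Q (-w + v)" by (simp add: Q_def)
    then show ?thesis unfolding Qexp by (simp add: linear_neg[OF lin] Q_def)
  qed
  have QW: "Q w = (norm w)^2 * Q wh" if "w \<bullet> e = 0" "w \<bullet> \<nu> = 0" for w
  proof -
    have "norm (B w) = norm (B (norm w *\<^sub>R wh))"
      by (rule Fq) (use that wh in auto)
    then show ?thesis by (simp add: Q_def Qscale[unfolded Q_def])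
  qed
  define \<kappa> where "\<kappa> = Q wh"
  have kpos: "\<kappa> > 0"
  proof -
    have "wh \<noteq> 0" using wh by auto
    then have "B wh \<noteq> 0" using inj linear_0[OF lin] by (metis injD)
    then show ?thesis by (simp add: \<kappa>_def Q_def)
  qed
  define \<beta> where "\<beta> = (Q v - \<kappa> * (norm v)^2) / \<kappa>"
  have QN: "Q x = \<kappa> * ((norm x)^2 + \<beta> * (x \<bullet> e)^2)" if "x \<bullet> \<nu> = 0" for x
  proof -
    define t where "t = x \<bullet> e"
    define w where "w = x - t *\<^sub>R v"
    have we: "w \<bullet> e = 0" "w \<bullet> \<nu> = 0" using that ve vnu by (simp_all add: w_def t_def inner_diff_left)
    have xw: "x = w + t *\<^sub>R v" by (simp add: w_def)
    have nx: "(norm x)^2 = (norm w)^2 + t^2 * (norm v)^2"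
      using vW[OF we] unfolding xw
      by (simp add: power2_norm_eq_inner inner_add_left inner_add_right inner_commute algebra_simps power2_eq_square[of t])
    have "Q x = Q w + 2 * (B w \<bullet> B (t *\<^sub>R v)) + t^2 * Q v" unfolding xw Qexp Qscale by simp
    also have "\<dots> = (norm w)^2 * \<kappa> + t^2 * Q v"
      using orthB[OF we] QW[OF we] by (simp add: linear_scale[OF lin] \<kappa>_def)
    also have "\<dots> = \<kappa> * ((norm x)^2 + \<beta> * t^2)"
      using kpos unfolding nx \<beta>_def by (simp add: field_simps)
    finally show ?thesis by (simp add: t_def)
  qed
  show ?thesis
  proof (intro exI conjI allI impI)
    show "\<kappa> > 0" by (rule kpos)
    fix x :: 'a assume cone: "(x \<bullet> e)^2 * (norm v)^2 \<le> (norm x)^2"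
    define t where "t = x \<bullet> e"
    define s where "s = sqrt ((norm x)^2 - t^2 * (norm v)^2)"
    have s2: "s^2 = (norm x)^2 - t^2 * (norm v)^2" using cone by (simp add: s_def t_def)
    define y where "y = t *\<^sub>R v + s *\<^sub>R wh"
    have ynu: "y \<bullet> \<nu> = 0" using vnu wh by (simp add: y_def inner_add_left)
    have ye: "y \<bullet> e = x \<bullet> e" using ve wh by (simp add: y_def inner_add_left t_def)
    have yn2: "(norm y)^2 = (norm x)^2"
      using wh s2 norm_eq_1[of wh] by (simp add: y_def power2_norm_eq_inner inner_add_left inner_add_right inner_commute algebra_simps power2_eq_square[of t] power2_eq_square[of s])
    then have yn: "norm y = norm x" by (simp add: power2_eq_iff_nonneg)
    have "x \<in> K \<longleftrightarrow> y \<in> K" using rev[of x y] rev[of y x] ye yn by auto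
    also have "\<dots> \<longleftrightarrow> norm (B y) \<le> r" using sec ynu nu by simp
    also have "\<dots> \<longleftrightarrow> Q y \<le> r^2" using r by (simp add: Q_def abs_le_square_iff[symmetric])
    also have "\<dots> \<longleftrightarrow> \<kappa> * ((norm x)^2 + \<beta> * (x \<bullet> e)^2) \<le> r^2"
      using QN[OF ynu] yn ye by simp
    finally show "x \<in> K \<longleftrightarrow> \<kappa> * ((norm x)^2 + \<beta> * (x \<bullet> e)^2) \<le> r^2" .
  qed
qed



lemma ball_lemma:
  fixes K :: "'a::euclidean_space set"
  assumes dim: "DIM('a) \<ge> 3" and cK: "compact K" and cvx: "convex K" and int0: "0 \<in> interior K"
  and e1: "norm e = 1" and d1: "norm d = 1" and ed: "\<bar>e \<bullet> d\<bar> < 1"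
  and inv_e: "\<And>x y. x \<in> K \<Longrightarrow> y \<bullet> e = x \<bullet> e \<Longrightarrow> norm y = norm x \<Longrightarrow> y \<in> K"
  and inv_d: "\<And>x y. x \<in> K \<Longrightarrow> y \<bullet> d = x \<bullet> d \<Longrightarrow> norm y = norm x \<Longrightarrow> y \<in> K"
  shows "\<exists>R>0. K = cball 0 R"
proof -
  define c where "c = e \<bullet> d"
  have ee: "e \<bullet> e = 1" using e1 by (simp add: norm_eq_1)
  have dd: "d \<bullet> d = 1" using d1 by (simp add: norm_eq_1)
  obtain w0 where w0: "w0 \<noteq> 0" "w0 \<bullet> e = 0" "w0 \<bullet> d = 0" using exists_orth2[OF dim] by blast
  define w where "w = w0 /\<^sub>R norm w0"
  have wn: "norm w = 1" using w0 by (simp add: w_def)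
  have w: "w \<bullet> w = 1" "w \<bullet> e = 0" "w \<bullet> d = 0"
    using w0 wn norm_eq_1[of w] by (auto simp: w_def)
  have clK: "closed K" using cK by (rule compact_imp_closed)
  have rel_e: "(t *\<^sub>R x \<in> K) \<longleftrightarrow> (t *\<^sub>R y \<in> K)" if "x \<bullet> e = y \<bullet> e" "norm x = norm y" for x y t
    using inv_e[of "t *\<^sub>R x" "t *\<^sub>R y"] inv_e[of "t *\<^sub>R y" "t *\<^sub>R x"] that by auto
  have rel_d: "(t *\<^sub>R x \<in> K) \<longleftrightarrow> (t *\<^sub>R y \<in> K)" if "x \<bullet> d = y \<bullet> d" "norm x = norm y" for x y t
    using inv_d[of "t *\<^sub>R x" "t *\<^sub>R y"] inv_d[of "t *\<^sub>R y" "t *\<^sub>R x"] that by auto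
  define x0 where "x0 a = a *\<^sub>R e + sqrt (1 - a^2) *\<^sub>R w" for a
  have x0e: "x0 a \<bullet> e = a" for a using w ee by (simp add: x0_def inner_add_left inner_add_right inner_commute)
  have x0n: "norm (x0 a) = 1" if "\<bar>a\<bar> \<le> 1" for a
  proof -
    have "a^2 \<le> 1" using that by (simp add: abs_square_le_1)
    then have sq: "sqrt (1 - a^2) * sqrt (1 - a^2) = 1 - a^2" by simp
    have "x0 a \<bullet> x0 a = a * a * (e \<bullet> e) + sqrt (1 - a^2) * sqrt (1 - a^2) * (w \<bullet> w)"
      using w by (simp add: x0_def inner_add_left inner_add_right inner_commute algebra_simps)
    then have "x0 a \<bullet> x0 a = 1" using w ee sq by (simp add: power2_eq_square)
    then show ?thesis by (simp add: norm_eq_1)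
  qed
  have c1: "\<bar>c\<bar> < 1" using ed by (simp add: c_def)
  have c2: "c^2 \<le> 1" using c1 by (simp add: abs_square_le_1)
  have c2k: "(c^2)^k \<le> 1" for k :: nat using c2 by (simp add: power_le_one)
  have step: "(t *\<^sub>R x0 a \<in> K) \<longleftrightarrow> (t *\<^sub>R x0 (c^2 * a) \<in> K)" if a: "\<bar>a\<bar> \<le> 1" for a t
  proof -
    have ac: "\<bar>a * c\<bar> \<le> 1" using a c1 by (simp add: abs_mult mult_le_one)
    have ac2: "\<bar>c^2 * a\<bar> \<le> 1" using a c2 by (simp add: abs_mult mult_le_one)
    define y where "y = (a * c) *\<^sub>R d + sqrt (1 - (a*c)^2) *\<^sub>R w"
    have "(a*c)^2 \<le> 1" using ac by (simp add: abs_square_le_1)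
    then have sq: "sqrt (1 - (a*c)^2) * sqrt (1 - (a*c)^2) = 1 - (a*c)^2" by simp
    have "y \<bullet> y = (a*c) * (a*c) * (d \<bullet> d) + sqrt (1 - (a*c)^2) * sqrt (1 - (a*c)^2) * (w \<bullet> w)"
      using w by (simp add: y_def inner_add_left inner_add_right inner_commute algebra_simps)
    then have yy: "y \<bullet> y = 1" using w dd sq by (simp add: power2_eq_square)
    have yn: "norm y = 1" using yy by (simp add: norm_eq_1)
    have yd: "y \<bullet> d = a * c" using w dd by (simp add: y_def inner_add_left inner_add_right inner_commute)
    have ye: "y \<bullet> e = c^2 * a" using w by (simp add: y_def inner_add_left inner_add_right inner_commute c_def power2_eq_square)
    have x0d: "x0 a \<bullet> d = a * c" using w by (simp add: x0_def inner_add_left inner_add_right c_def inner_commute)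
    have "(t *\<^sub>R x0 a \<in> K) \<longleftrightarrow> (t *\<^sub>R y \<in> K)"
      by (rule rel_d) (use x0d yd x0n[OF a] yn in auto)
    also have "\<dots> \<longleftrightarrow> (t *\<^sub>R x0 (c^2 * a) \<in> K)"
      by (rule rel_e) (use ye x0e x0n[OF ac2] yn in auto)
    finally show ?thesis .
  qed
  have iter: "(t *\<^sub>R x0 a \<in> K) \<longleftrightarrow> (t *\<^sub>R x0 ((c^2)^k * a) \<in> K)" if a: "\<bar>a\<bar> \<le> 1" for a t k
  proof (induction k)
    case 0 then show ?case by simp
  next
    case (Suc k)
    have "\<bar>(c^2)^k * a\<bar> \<le> 1" using a c2k[of k]
      by (simp add: abs_mult mult_le_one)
    from step[OF this, of t] Suc show ?case by (simp add: mult.assoc)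
  qed
  have lim: "(\<lambda>k. t *\<^sub>R x0 ((c^2)^k * a)) \<longlonglongrightarrow> t *\<^sub>R w" for a t
  proof -
    have g: "(\<lambda>k. (c^2)^k * a) \<longlonglongrightarrow> 0"
      by (intro tendsto_mult_left_zero LIMSEQ_power_zero) (use c1 in \<open>simp add: abs_square_less_1\<close>)
    have "(\<lambda>k. t *\<^sub>R x0 ((c^2)^k * a)) \<longlonglongrightarrow> t *\<^sub>R (0 *\<^sub>R e + sqrt (1 - 0^2) *\<^sub>R w)"
      unfolding x0_def by (intro tendsto_intros g)
    then show ?thesis by simp
  qed
  have partA: "t *\<^sub>R w \<in> K" if "t *\<^sub>R x0 a \<in> K" "\<bar>a\<bar> \<le> 1" for a t
  proof -
    have "\<forall>k. t *\<^sub>R x0 ((c^2)^k * a) \<in> K" using iter[OF that(2)] that(1) by blast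
    then show ?thesis using closed_sequentially[OF clK _ lim[of t a]] by blast
  qed
  have partB: "t *\<^sub>R x0 a \<in> K" if "t *\<^sub>R w \<in> interior K" "\<bar>a\<bar> \<le> 1" for a t
  proof -
    have "\<forall>\<^sub>F k in sequentially. t *\<^sub>R x0 ((c^2)^k * a) \<in> interior K"
      using topological_tendstoD[OF lim[of t a] open_interior that(1)] .
    then obtain N where "\<forall>k\<ge>N. t *\<^sub>R x0 ((c^2)^k * a) \<in> interior K"
      unfolding eventually_sequentially by blast
    then obtain k where "t *\<^sub>R x0 ((c^2)^k * a) \<in> interior K" by blast
    then have "t *\<^sub>R x0 ((c^2)^k * a) \<in> K" using interior_subset by blast
    then show ?thesis using iter[OF that(2)] by blast
  qed
  have key: "(t *\<^sub>R x \<in> K) \<longleftrightarrow> (t *\<^sub>R w \<in> K)" if x: "norm x = 1" and t: "t \<ge> 0" for x t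
  proof -
    define a where "a = x \<bullet> e"
    have a1: "\<bar>a\<bar> \<le> 1" using Cauchy_Schwarz_ineq2[of x e] x e1 by (simp add: a_def)
    have rx: "(s *\<^sub>R x \<in> K) \<longleftrightarrow> (s *\<^sub>R x0 a \<in> K)" for s
      by (rule rel_e) (use x0e x0n[OF a1] x in \<open>auto simp: a_def\<close>)
    show ?thesis
    proof
      assume "t *\<^sub>R x \<in> K" then show "t *\<^sub>R w \<in> K" using partA[OF _ a1] rx by blast
    next
      assume tw: "t *\<^sub>R w \<in> K"
      show "t *\<^sub>R x \<in> K"
      proof (cases "t = 0")
        case True then show ?thesis using int0 interior_subset by auto
      next
        case False
        then have tp: "t > 0" using t by simp
        have sin: "s *\<^sub>R x0 a \<in> K" if "0 \<le> s" "s < t" for s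
        proof -
          have "t *\<^sub>R w - (1 - s/t) *\<^sub>R (t *\<^sub>R w - 0) \<in> interior K"
            by (rule mem_interior_convex_shrink[OF cvx int0 tw]) (use that tp in auto)
          moreover have "t *\<^sub>R w - (1 - s/t) *\<^sub>R (t *\<^sub>R w - 0) = s *\<^sub>R w"
            using tp by (simp add: algebra_simps)
          ultimately show ?thesis using partB[OF _ a1] by simp
        qed
        define sq where "sq k = t - t * inverse (real (Suc k))" for k
        have "(\<lambda>k. t - t * inverse (real (Suc k))) \<longlonglongrightarrow> t - t * 0"
          by (intro tendsto_intros LIMSEQ_inverse_real_of_nat)
        then have sqlim: "sq \<longlonglongrightarrow> t" by (simp add: sq_def[abs_def])
        have "(\<lambda>k. sq k *\<^sub>R x0 a) \<longlonglongrightarrow> t *\<^sub>R x0 a" by (intro tendsto_intros sqlim)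
        moreover have "\<forall>k. sq k *\<^sub>R x0 a \<in> K"
        proof
          fix k
          have "0 \<le> sq k" using tp by (simp add: sq_def field_simps)
          moreover have "sq k < t" using tp by (simp add: sq_def)
          ultimately show "sq k *\<^sub>R x0 a \<in> K" by (rule sin)
        qed
        ultimately have "t *\<^sub>R x0 a \<in> K"
          using closed_sequentially[OF clK, of "\<lambda>k. sq k *\<^sub>R x0 a"] by blast
        then show ?thesis using rx by blast
      qed
    qed
  qed
  define S where "S = {t. t \<ge> 0 \<and> t *\<^sub>R w \<in> K}"
  obtain \<epsilon> where ep: "\<epsilon> > 0" "ball 0 \<epsilon> \<subseteq> K" using int0 by (meson mem_interior)
  have epS: "\<epsilon>/2 \<in> S" using ep wn by (auto simp: S_def)
  obtain Bd where Bd: "\<And>x. x \<in> K \<Longrightarrow> norm x \<le> Bd"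
    using compact_imp_bounded[OF cK] by (meson bounded_iff)
  have bddS: "bdd_above S" unfolding bdd_above_def S_def
  proof (intro exI[of _ Bd] allI impI ballI)
    fix x assume "x \<in> {t. 0 \<le> t \<and> t *\<^sub>R w \<in> K}"
    then have "norm (x *\<^sub>R w) \<le> Bd" "x \<ge> 0" using Bd[of "x *\<^sub>R w"] by auto
    then show "x \<le> Bd" using wn by simp
  qed
  have clS: "closed S"
  proof -
    have "S = {t. t \<ge> 0} \<inter> (\<lambda>t. t *\<^sub>R w) -` K" by (auto simp: S_def)
    moreover have "closed ((\<lambda>t::real. t *\<^sub>R w) -` K)"
      by (intro closed_vimage clK continuous_intros)
    moreover have "{t::real. t \<ge> 0} = {0..}" by auto
    ultimately show ?thesis by (metis closed_Int closed_atLeast)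
  qed
  define R where "R = Sup S"
  have RS: "R \<in> S" unfolding R_def using closed_contains_Sup[OF _ bddS clS] epS by blast
  have Rpos: "R > 0" using cSup_upper[OF epS bddS] ep by (simp add: R_def)
  have star: "u *\<^sub>R y \<in> K" if "y \<in> K" "0 \<le> u" "u \<le> 1" for u y
  proof -
    have "u *\<^sub>R y + (1 - u) *\<^sub>R 0 \<in> K"
      using convexD[OF cvx that(1), of 0 u "1-u"] int0 interior_subset that by auto
    then show ?thesis by simp
  qed
  have inS: "t \<in> S \<longleftrightarrow> 0 \<le> t \<and> t \<le> R" for t
  proof
    assume "t \<in> S" then show "0 \<le> t \<and> t \<le> R" using cSup_upper[OF _ bddS] by (auto simp: S_def R_def)
  next
    assume h: "0 \<le> t \<and> t \<le> R"
    have "(t / R) *\<^sub>R (R *\<^sub>R w) \<in> K"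
      by (rule star) (use RS h Rpos in \<open>auto simp: S_def\<close>)
    then show "t \<in> S" using h Rpos by (simp add: S_def)
  qed
  show ?thesis
  proof (intro exI conjI)
    show "R > 0" by (rule Rpos)
    show "K = cball 0 R"
    proof (rule set_eqI)
      fix x :: 'a
      show "x \<in> K \<longleftrightarrow> x \<in> cball 0 R"
      proof (cases "x = 0")
        case True then show ?thesis using int0 interior_subset Rpos by auto
      next
        case False
        define u where "u = x /\<^sub>R norm x"
        have un: "norm u = 1" using False by (simp add: u_def)
        have xu: "x = norm x *\<^sub>R u" using False by (simp add: u_def)
        have "x \<in> K \<longleftrightarrow> norm x *\<^sub>R w \<in> K" using key[OF un norm_ge_zero[of x]] xu by simp
        also have "\<dots> \<longleftrightarrow> norm x \<in> S" by (simp add: S_def)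
        also have "\<dots> \<longleftrightarrow> norm x \<le> R" using inS by simp
        finally show ?thesis by simp
      qed
    qed
  qed
qed



lemma hyp_sub:
  fixes p q :: "'a::euclidean_space"
  assumes "p \<noteq> 0" "q \<noteq> 0" "\<And>x. x \<bullet> p = 0 \<Longrightarrow> x \<bullet> q = 0"
  shows "x \<bullet> q = 0 \<Longrightarrow> x \<bullet> p = 0"
proof -
  have pp: "p \<bullet> p > 0" using assms by simp
  have lin: "x \<bullet> q = (p \<bullet> q / (p \<bullet> p)) * (x \<bullet> p)" for x
  proof -
    have "(x - ((x \<bullet> p) / (p \<bullet> p)) *\<^sub>R p) \<bullet> p = 0" using pp by (simp add: inner_diff_left)
    then have "(x - ((x \<bullet> p) / (p \<bullet> p)) *\<^sub>R p) \<bullet> q = 0" by (rule assms(3))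
    then show ?thesis using pp by (simp add: inner_diff_left inner_diff_right inner_commute field_simps)
  qed
  have k: "p \<bullet> q \<noteq> 0"
  proof
    assume "p \<bullet> q = 0"
    then have "q \<bullet> q = 0" using lin[of q] by simp
    then show False using assms by simp
  qed
  assume "x \<bullet> q = 0"
  then show "x \<bullet> p = 0" using lin[of x] k pp by simp
qed

lemma hyp_neq:
  fixes p q :: "'a::euclidean_space"
  assumes "p \<noteq> 0" "q \<noteq> 0" "{x. x \<bullet> p = 0} \<noteq> {x. x \<bullet> q = 0}"
  shows "\<exists>x. x \<bullet> p = 0 \<and> x \<bullet> q \<noteq> 0"
proof (rule ccontr)
  assume "\<not> ?thesis"
  then have h: "\<And>x. x \<bullet> p = 0 \<Longrightarrow> x \<bullet> q = 0" by blast
  have "\<And>x. x \<bullet> q = 0 \<Longrightarrow> x \<bullet> p = 0" using hyp_sub[OF assms(1,2) h] by blast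
  then show False using h assms(3) by blast
qed

lemma seq_growth_pos:
  fixes g :: "nat \<Rightarrow> real"
  assumes "\<tau> \<ge> 2" "g 0 = 0" "g 1 = 1" "\<And>k. g (Suc (Suc k)) = \<tau> * g (Suc k) - g k"
  shows "g k \<ge> real k \<and> g (Suc k) - g k \<ge> 1"
proof (induction k)
  case 0 then show ?case using assms by simp
next
  case (Suc k)
  then have a: "g (Suc k) \<ge> real (Suc k)" by simp
  have "g (Suc (Suc k)) - g (Suc k) = (\<tau> - 2) * g (Suc k) + (g (Suc k) - g k)"
    using assms(4)[of k] by (simp add: algebra_simps)
  moreover have "(\<tau> - 2) * g (Suc k) \<ge> 0" using a assms(1) by simp
  ultimately show ?case using a Suc by simp
qed

lemma seq_growth:
  fixes g :: "nat \<Rightarrow> real"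
  assumes "\<bar>\<tau>\<bar> \<ge> 2" "g 0 = 0" "g 1 = 1" "\<And>k. g (Suc (Suc k)) = \<tau> * g (Suc k) - g k"
  shows "\<bar>g k\<bar> \<ge> real k"
proof (cases "\<tau> \<ge> 2")
  case True
  then show ?thesis using seq_growth_pos[of \<tau> g k] assms by auto
next
  case False
  then have t: "-\<tau> \<ge> 2" using assms(1) by linarith
  define h where "h k = - ((-1)^k * g k)" for k
  have "h (Suc (Suc k)) = (-\<tau>) * h (Suc k) - h k" for k
  proof -
    have "h (Suc (Suc k)) = -((-1)^k * (\<tau> * g (Suc k) - g k))" by (simp add: h_def assms(4))
    also have "\<dots> = (-\<tau>) * h (Suc k) - h k" by (simp add: h_def algebra_simps)
    finally show ?thesis .
  qed
  then have "h k \<ge> real k" using seq_growth_pos[of "-\<tau>" h k] t assms(2,3) by (simp add: h_def)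
  moreover have "\<bar>h k\<bar> = \<bar>g k\<bar>" by (simp add: h_def abs_mult)
  ultimately show ?thesis by linarith
qed

lemma scale_eq2:
  fixes a b :: real
  assumes "a \<ge> 0" "b \<ge> 0" "\<And>t. t > 0 \<Longrightarrow> (t^2 * a \<le> 1 \<longleftrightarrow> t^2 * b \<le> 1)"
  shows "a = b"
proof -
  have "sqrt a = sqrt b"
  proof (rule scale_eq[of _ _ 1])
    fix t :: real assume t: "t > 0"
    have "t * sqrt a \<le> 1 \<longleftrightarrow> (t * sqrt a)^2 \<le> 1^2" using t assms(1)
      by (simp add: power_le_one_iff abs_le_square_iff[symmetric] )
    also have "\<dots> \<longleftrightarrow> t^2 * a \<le> 1" using assms(1) by (simp add: power_mult_distrib)
    also have "\<dots> \<longleftrightarrow> t^2 * b \<le> 1" using assms(3)[OF t] .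
    also have "\<dots> \<longleftrightarrow> (t * sqrt b)^2 \<le> 1^2" using assms(2) by (simp add: power_mult_distrib)
    also have "\<dots> \<longleftrightarrow> t * sqrt b \<le> 1" using t assms(2)
      by (simp add: power_le_one_iff abs_le_square_iff[symmetric])
    finally show "t * sqrt a \<le> 1 \<longleftrightarrow> t * sqrt b \<le> 1" .
  qed (use assms in auto)
  then show ?thesis using assms by simp
qed

lemma comb2: "(p::real) *\<^sub>R e + q *\<^sub>R d + C *\<^sub>R e - E *\<^sub>R d = (p + C) *\<^sub>R e + (q - E) *\<^sub>R (d::'a::real_vector)"
  by (simp add: algebra_simps)

lemma coef_eq: "(X::real) = X' \<Longrightarrow> (Y::real) = Y' \<Longrightarrow> X *\<^sub>R e + Y *\<^sub>R d = X' *\<^sub>R e + Y' *\<^sub>R (d::'a::real_vector)"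
  by simp

lemma comb3: "(\<tau>::real) *\<^sub>R (P *\<^sub>R e + Q *\<^sub>R d) - (p *\<^sub>R e + q *\<^sub>R d) = (\<tau>*P - p) *\<^sub>R e + (\<tau>*Q - q) *\<^sub>R (d::'a::real_vector)"
  by (simp add: algebra_simps)



lemma core:
  fixes K0 :: "'a::euclidean_space set" and A B :: "'a \<Rightarrow> 'a"
  assumes dim: "DIM('a) \<ge> 3" and e1: "norm e = 1" and m1: "norm m = 1"
  and linA: "linear A" and linB: "linear B" and BA: "\<And>z. B (A z) = z" and AB: "\<And>x. A (B x) = x"
  and cK: "compact K0" and cvx: "convex K0" and int0: "0 \<in> interior K0"
  and rev0: "\<And>x y. x \<in> K0 \<Longrightarrow> y \<bullet> e = x \<bullet> e \<Longrightarrow> norm y = norm x \<Longrightarrow> y \<in> K0"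
  and rev1: "\<And>x y. x \<in> K0 \<Longrightarrow> B y \<bullet> m = B x \<bullet> m \<Longrightarrow> norm (B y) = norm (B x) \<Longrightarrow> y \<in> K0"
  and sec0: "\<And>x. x \<bullet> e = 0 \<Longrightarrow> (x \<in> K0 \<longleftrightarrow> norm x \<le> r0)" and r0: "r0 > 0"
  and sec1: "\<And>x. B x \<bullet> m = 0 \<Longrightarrow> (x \<in> K0 \<longleftrightarrow> norm (B x) \<le> r1)" and r1: "r1 > 0"
  and hyp: "{x. x \<bullet> e = 0} \<noteq> {x. B x \<bullet> m = 0}"
  shows "ellipsoid K0"
proof -
  have ee: "e \<bullet> e = 1" using e1 by (simp add: norm_eq_1)
  have mm: "m \<bullet> m = 1" using m1 by (simp add: norm_eq_1)
  define \<nu> where "\<nu> = adjoint B m"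
  have nu: "B x \<bullet> m = x \<bullet> \<nu>" for x by (simp add: \<nu>_def adjoint_works[OF linB])
  have nu0: "\<nu> \<noteq> 0"
  proof
    assume "\<nu> = 0"
    then have "B (A m) \<bullet> m = 0" by (simp add: nu)
    then show False using mm BA by simp
  qed
  have e0: "e \<noteq> 0" using e1 by auto
  have hyp': "{x. x \<bullet> e = 0} \<noteq> {x. x \<bullet> \<nu> = 0}" using hyp nu by simp
  have h1: "\<exists>x. x \<bullet> \<nu> = 0 \<and> x \<bullet> e \<noteq> 0" using hyp_neq[OF nu0 e0] hyp' by metis
  have h2: "\<exists>x. x \<bullet> e = 0 \<and> x \<bullet> \<nu> \<noteq> 0" using hyp_neq[OF e0 nu0] hyp' by metis
  have injA: "inj A" by (metis BA injI)
  have injB: "inj B" by (metis AB injI)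
  obtain Bd where Bd: "\<And>x. x \<in> K0 \<Longrightarrow> norm x \<le> Bd"
    using compact_imp_bounded[OF cK] by (meson bounded_iff)
  have K00: "0 \<in> K0" using int0 interior_subset by blast
  have Bd0: "Bd \<ge> 0" using Bd[OF K00] by simp
  obtain \<epsilon> where ep: "\<epsilon> > 0" "ball 0 \<epsilon> \<subseteq> K0" using int0 by (meson mem_interior)
  obtain V1 \<kappa>1 \<beta>1 where k1: "\<kappa>1 > 0" and H1: "\<And>x. (x \<bullet> e)^2 * V1 \<le> (norm x)^2 \<Longrightarrow>
      (x \<in> K0 \<longleftrightarrow> \<kappa>1 * ((norm x)^2 + \<beta>1 * (x \<bullet> e)^2) \<le> r1^2)"
  proof -
    have "\<exists>V \<kappa> \<beta>. \<kappa> > 0 \<and> (\<forall>x. (x \<bullet> e)^2 * V \<le> (norm x)^2 \<longrightarrow>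
            (x \<in> K0 \<longleftrightarrow> \<kappa> * ((norm x)^2 + \<beta> * (x \<bullet> e)^2) \<le> r1^2))"
      by (rule half[where K=K0 and e=e and B=B and m=m and r=r1]) (use dim e1 linB injB rev0 sec1 r1 h1 nu in auto)
    then show ?thesis using that by blast
  qed
  obtain V2 \<kappa>2 \<beta>2 where k2: "\<kappa>2 > 0" and H2: "\<And>z. (z \<bullet> m)^2 * V2 \<le> (norm z)^2 \<Longrightarrow>
      (z \<in> {z. A z \<in> K0} \<longleftrightarrow> \<kappa>2 * ((norm z)^2 + \<beta>2 * (z \<bullet> m)^2) \<le> r0^2)"
  proof -
    have revK1: "y \<in> {z. A z \<in> K0}" if "x \<in> {z. A z \<in> K0}" "y \<bullet> m = x \<bullet> m" "norm y = norm x" for x y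
      using rev1[of "A x" "A y"] that BA by auto
    have secK1: "x \<in> {z. A z \<in> K0} \<longleftrightarrow> norm (A x) \<le> r0" if "A x \<bullet> e = 0" for x
      using sec0[OF that] by simp
    have hK1: "\<exists>x. A x \<bullet> e = 0 \<and> x \<bullet> m \<noteq> 0"
    proof -
      obtain x where "x \<bullet> e = 0" "x \<bullet> \<nu> \<noteq> 0" using h2 by blast
      then show ?thesis using AB nu by (intro exI[of _ "B x"]) auto
    qed
    have "\<exists>V \<kappa> \<beta>. \<kappa> > 0 \<and> (\<forall>x. (x \<bullet> m)^2 * V \<le> (norm x)^2 \<longrightarrow>
            (x \<in> {z. A z \<in> K0} \<longleftrightarrow> \<kappa> * ((norm x)^2 + \<beta> * (x \<bullet> m)^2) \<le> r0^2))"
      by (rule half[where K="{z. A z \<in> K0}" and e=m and B=A and m=e and r=r0]) (use dim m1 linA injA revK1 secK1 r0 hK1 in auto)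
    then show ?thesis using that by blast
  qed
  define lam1 where "lam1 = \<kappa>1 / r1^2"
  define lam2 where "lam2 = \<kappa>2 / r0^2"
  have l1: "lam1 > 0" using k1 r1 by (simp add: lam1_def)
  have l2: "lam2 > 0" using k2 r0 by (simp add: lam2_def)
  define F1 where "F1 x = lam1 * ((norm x)^2 + \<beta>1 * (x \<bullet> e)^2)" for x
  define F2 where "F2 x = lam2 * ((norm (B x))^2 + \<beta>2 * (B x \<bullet> m)^2)" for x
  define P1 where "P1 x y = lam1 * (x \<bullet> y + \<beta>1 * (x \<bullet> e) * (y \<bullet> e))" for x y
  define P2 where "P2 x y = lam2 * (B x \<bullet> B y + \<beta>2 * (B x \<bullet> m) * (B y \<bullet> m))" for x y
  have C1: "x \<in> K0 \<longleftrightarrow> F1 x \<le> 1" if "(x \<bullet> e)^2 * V1 \<le> (norm x)^2" for x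
    using H1[OF that] r1 by (simp add: F1_def lam1_def divide_simps mult.commute)
  have C2: "x \<in> K0 \<longleftrightarrow> F2 x \<le> 1" if "(B x \<bullet> m)^2 * V2 \<le> (norm (B x))^2" for x
    using H2[OF that] r0 AB[of x] by (simp add: F2_def lam2_def divide_simps mult.commute)
  have F1exp: "F1 (x + s *\<^sub>R y) = F1 x + 2 * s * P1 x y + s^2 * F1 y" for x y s
    unfolding F1_def P1_def power2_norm_eq_inner by (simp add: inner_add_left inner_add_right inner_commute algebra_simps power2_eq_square)
  have F2exp: "F2 (x + s *\<^sub>R y) = F2 x + 2 * s * P2 x y + s^2 * F2 y" for x y s
    unfolding F2_def P2_def power2_norm_eq_inner by (simp add: linear_add[OF linB] linear_scale[OF linB] inner_add_left inner_add_right inner_commute algebra_simps power2_eq_square)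
  have F1sc: "F1 (t *\<^sub>R x) = t^2 * F1 x" for t x
    using F1exp[of 0 t x] by (simp add: F1_def P1_def)
  have F2sc: "F2 (t *\<^sub>R x) = t^2 * F2 x" for t x
    using F2exp[of 0 t x] linear_0[OF linB] by (simp add: F2_def P2_def)

  have pos1: "F1 x > 0" if "x \<noteq> 0" "(x \<bullet> e)^2 * V1 \<le> (norm x)^2" for x
  proof (rule ccontr)
    assume "\<not> F1 x > 0"
    then have F0: "F1 x \<le> 0" by simp
    define t where "t = (Bd + 1) / norm x"
    have tp: "t > 0" using that Bd0 by (simp add: t_def)
    have "((t *\<^sub>R x) \<bullet> e)^2 * V1 \<le> (norm (t *\<^sub>R x))^2"
      using that(2) tp by (simp add: power_mult_distrib mult.assoc mult_left_mono)
    moreover have "F1 (t *\<^sub>R x) \<le> 1"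
    proof -
      have "t^2 * F1 x \<le> 0" using F0 by (intro mult_nonneg_nonpos) auto
      then show ?thesis by (simp add: F1sc)
    qed
    ultimately have "t *\<^sub>R x \<in> K0" using C1 by blast
    then have "norm (t *\<^sub>R x) \<le> Bd" by (rule Bd)
    moreover have "norm (t *\<^sub>R x) = Bd + 1" using tp that(1) Bd0 by (simp add: t_def)
    ultimately show False by simp
  qed
  have pos2: "F2 x > 0" if "x \<noteq> 0" "(B x \<bullet> m)^2 * V2 \<le> (norm (B x))^2" for x
  proof (rule ccontr)
    assume "\<not> F2 x > 0"
    then have F0: "F2 x \<le> 0" by simp
    define t where "t = (Bd + 1) / norm x"
    have tp: "t > 0" using that Bd0 by (simp add: t_def)
    have "(B (t *\<^sub>R x) \<bullet> m)^2 * V2 \<le> (norm (B (t *\<^sub>R x)))^2"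
      using that(2) tp by (simp add: linear_scale[OF linB] power_mult_distrib mult.assoc mult_left_mono)
    moreover have "F2 (t *\<^sub>R x) \<le> 1"
    proof -
      have "t^2 * F2 x \<le> 0" using F0 by (intro mult_nonneg_nonpos) auto
      then show ?thesis by (simp add: F2sc)
    qed
    ultimately have "t *\<^sub>R x \<in> K0" using C2 by blast
    then have "norm (t *\<^sub>R x) \<le> Bd" by (rule Bd)
    moreover have "norm (t *\<^sub>R x) = Bd + 1" using tp that(1) Bd0 by (simp add: t_def)
    ultimately show False by simp
  qed
  define U where "U = {x. (x \<bullet> e)^2 * V1 < (norm x)^2} \<inter> {x. (B x \<bullet> m)^2 * V2 < (norm (B x))^2}"
  have contB: "continuous_on UNIV B" by (rule linear_continuous_on[OF linear_conv_bounded_linear[THEN iffD1, OF linB]])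
  have openU: "open U" unfolding U_def
    by (intro open_Int open_Collect_less continuous_intros continuous_on_compose2[OF contB] ) auto
  obtain w0 where w0: "w0 \<noteq> 0" "w0 \<bullet> e = 0" "w0 \<bullet> \<nu> = 0" using exists_orth2[OF dim] by blast
  have w0U: "w0 \<in> U"
  proof -
    have "B w0 \<noteq> 0" using w0(1) injB linear_0[OF linB] by (metis injD)
    then show ?thesis using w0 nu by (simp add: U_def)
  qed
  have eqU: "F1 x = F2 x" if "x \<in> U" for x
  proof -
    have c1: "(x \<bullet> e)^2 * V1 \<le> (norm x)^2" and c2: "(B x \<bullet> m)^2 * V2 \<le> (norm (B x))^2"
      using that by (auto simp: U_def)
    have x0: "x \<noteq> 0" using that by (auto simp: U_def)
    show ?thesis
    proof (rule scale_eq2)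
      show "F1 x \<ge> 0" using pos1[OF x0 c1] by simp
      show "F2 x \<ge> 0" using pos2[OF x0 c2] by simp
      fix t :: real assume tp: "t > 0"
      have c1t: "((t *\<^sub>R x) \<bullet> e)^2 * V1 \<le> (norm (t *\<^sub>R x))^2"
        using c1 tp by (simp add: power_mult_distrib mult.assoc mult_left_mono)
      have c2t: "(B (t *\<^sub>R x) \<bullet> m)^2 * V2 \<le> (norm (B (t *\<^sub>R x)))^2"
        using c2 tp by (simp add: linear_scale[OF linB] power_mult_distrib mult.assoc mult_left_mono)
      show "t^2 * F1 x \<le> 1 \<longleftrightarrow> t^2 * F2 x \<le> 1"
        using C1[OF c1t] C2[OF c2t] by (simp add: F1sc F2sc)
    qed
  qed
  have Feq: "F1 y = F2 y" for y
  proof -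
    obtain \<delta> where dl: "\<delta> > 0" "ball w0 \<delta> \<subseteq> U" using openU w0U by (meson openE)
    define n1 where "n1 = norm y + 1"
    have n1: "n1 > 0" "norm y \<le> n1" unfolding n1_def by (smt (verit) norm_ge_zero)+
    define s where "s = \<delta> / (2 * n1)"
    have sp: "s > 0" using dl(1) n1 by (simp add: s_def)
    have sn: "s * n1 = \<delta> / 2" using n1 by (simp add: s_def)
    have sy: "s * norm y < \<delta>"
    proof -
      have "s * norm y \<le> s * n1" using sp n1 by simp
      then show ?thesis using sn dl by simp
    qed
    have inU: "w0 + t *\<^sub>R y \<in> U" if "\<bar>t\<bar> = s" for t
      using dl(2) sy that by (auto simp: dist_norm intro!: subsetD[OF dl(2)])
    have a: "F1 (w0 + s *\<^sub>R y) = F2 (w0 + s *\<^sub>R y)" using eqU inU[of s] sp by simp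
    have b: "F1 (w0 + (-s) *\<^sub>R y) = F2 (w0 + (-s) *\<^sub>R y)" using eqU inU[of "-s"] sp by simp
    have c: "F1 w0 = F2 w0" using eqU w0U by simp
    have a': "F1 w0 + 2 * s * P1 w0 y + s^2 * F1 y = F2 w0 + 2 * s * P2 w0 y + s^2 * F2 y"
      using a unfolding F1exp F2exp .
    have b': "F1 w0 - 2 * s * P1 w0 y + s^2 * F1 y = F2 w0 - 2 * s * P2 w0 y + s^2 * F2 y"
      using b unfolding F1exp F2exp by simp
    have "s^2 * F1 y = s^2 * F2 y" using a' b' c by linarith
    then show ?thesis using sp by simp
  qed
  have Peq: "P1 x y = P2 x y" for x y
    using F1exp[of x 1 y] F2exp[of x 1 y] Feq[of x] Feq[of y] Feq[of "x + y"] by simp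

  define d where "d = A m"
  have Bd_m: "B d = m" by (simp add: d_def BA)
  define l where "l x = B x \<bullet> m" for x
  have l_add: "l (x + y) = l x + l y" for x y by (simp add: l_def linear_add[OF linB] inner_add_left)
  have l_scale: "l (t *\<^sub>R x) = t * l x" for t x by (simp add: l_def linear_scale[OF linB])
  have l_diff: "l (x - y) = l x - l y" for x y by (simp add: l_def linear_diff[OF linB] inner_diff_left)
  have ld: "l d = 1" by (simp add: l_def Bd_m mm)
  define a where "a = d \<bullet> e"
  define b where "b = l e"
  define r1m where "r1m x = (2 * (x \<bullet> e)) *\<^sub>R e - x" for x
  define r2m where "r2m x = (2 * l x) *\<^sub>R d - x" for x
  define hm where "hm x = r1m (r2m x)" for x
  have pres1: "r1m x \<in> K0" if "x \<in> K0" for x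
  proof (rule rev0[OF that])
    show "r1m x \<bullet> e = x \<bullet> e" by (simp add: r1m_def inner_diff_left ee)
    have "r1m x \<bullet> r1m x = x \<bullet> x"
      by (simp add: r1m_def inner_diff_left inner_diff_right ee inner_commute algebra_simps)
    then show "norm (r1m x) = norm x" by (simp add: norm_eq_sqrt_inner)
  qed
  have pres2: "r2m x \<in> K0" if "x \<in> K0" for x
  proof (rule rev1[OF that])
    have Br: "B (r2m x) = (2 * l x) *\<^sub>R m - B x"
      by (simp add: r2m_def linear_diff[OF linB] linear_scale[OF linB] Bd_m)
    show "B (r2m x) \<bullet> m = B x \<bullet> m" by (simp add: Br inner_diff_left mm l_def)
    have "B (r2m x) \<bullet> B (r2m x) = B x \<bullet> B x"
      by (simp add: Br inner_diff_left inner_diff_right mm inner_commute algebra_simps l_def)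
    then show "norm (B (r2m x)) = norm (B x)" by (simp add: norm_eq_sqrt_inner)
  qed
  have presh: "hm x \<in> K0" if "x \<in> K0" for x using pres1 pres2 that by (simp add: hm_def)
  have hgen: "hm y = y + (4 * a * l y - 2 * (y \<bullet> e)) *\<^sub>R e - (2 * l y) *\<^sub>R d" for y
    by (simp add: hm_def r1m_def r2m_def inner_diff_left a_def ee algebra_simps inner_commute)
  have hlin_add: "hm (x + y) = hm x + hm y" for x y
    by (simp add: hgen l_add inner_add_left algebra_simps)
  have hlin_scale: "hm (t *\<^sub>R x) = t *\<^sub>R hm x" for t x
    by (simp add: hgen l_scale algebra_simps)
  have npar: "d - a *\<^sub>R e \<noteq> 0"
  proof
    assume par: "d - a *\<^sub>R e = 0"
    then have dae: "d = a *\<^sub>R e" by simp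
    have a0: "a \<noteq> 0" using ld dae l_scale by auto
    have le: "l e = 1 / a" using ld dae l_scale a0 by (simp add: field_simps)
    define lam where "lam x = 2 * (a * l x - x \<bullet> e)" for x
    have hlam: "hm y = y + lam y *\<^sub>R e" for y
    proof -
      have "hm y = y + ((4 * a * l y - 2 * (y \<bullet> e)) *\<^sub>R e - (2 * l y * a) *\<^sub>R e)"
        using hgen[of y] dae by simp
      also have "\<dots> = y + ((4 * a * l y - 2 * (y \<bullet> e)) - 2 * l y * a) *\<^sub>R e"
        by (simp only: scaleR_diff_left)
      also have "(4 * a * l y - 2 * (y \<bullet> e)) - 2 * l y * a = lam y" by (simp add: lam_def algebra_simps)
      finally show ?thesis .
    qed
    have lame: "lam e = 0" using le a0 ee by (simp add: lam_def)
    have lam_add: "lam (x + t *\<^sub>R e) = lam x" for x t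
      using lame by (simp add: lam_def l_add l_scale inner_add_left ee le a0 algebra_simps)
    show False
    proof (cases "\<forall>x. lam x = 0")
      case True
      have "{x. x \<bullet> e = 0} = {x. B x \<bullet> m = 0}"
      proof (rule set_eqI)
        fix x
        have "x \<bullet> e = a * l x" using True[rule_format, of x] by (simp add: lam_def)
        then show "x \<in> {x. x \<bullet> e = 0} \<longleftrightarrow> x \<in> {x. B x \<bullet> m = 0}" using a0 by (simp add: l_def)
      qed
      then show False using hyp by simp
    next
      case False
      then obtain x0 where x0: "lam x0 \<noteq> 0" by blast
      define n1 where "n1 = norm x0 + 1"
      have n1: "n1 > 0" "norm x0 < n1" unfolding n1_def by (smt (verit) norm_ge_zero)+
      define t where "t = \<epsilon> / (2 * n1)"
      have tp: "t > 0" using ep n1 by (simp add: t_def)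
      define x1 where "x1 = t *\<^sub>R x0"
      have lam_sc: "lam (c *\<^sub>R x) = c * lam x" for c x by (simp add: lam_def l_scale algebra_simps)
      have lx1: "lam x1 \<noteq> 0" using x0 tp by (simp add: x1_def lam_sc)
      have "norm x1 < \<epsilon>"
      proof -
        have "norm x1 = t * norm x0" using tp by (simp add: x1_def)
        also have "\<dots> \<le> t * n1" using tp n1 by simp
        also have "\<dots> = \<epsilon> / 2" using n1 by (simp add: t_def)
        finally show ?thesis using ep by simp
      qed
      then have x1K: "x1 \<in> K0" using ep by auto
      define y where "y k = x1 + (real k * lam x1) *\<^sub>R e" for k :: nat
      have yK: "y k \<in> K0" for k
      proof (induction k)
        case 0 then show ?case using x1K by (simp add: y_def)
      next
        case (Suc k)
        have "hm (y k) = y (Suc k)"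
          using lam_add[of x1 "real k * lam x1"] by (simp add: hlam y_def algebra_simps)
        then show ?case using presh[OF Suc] by simp
      qed
      obtain k :: nat where k: "real k > (Bd + norm x1) / \<bar>lam x1\<bar>" using reals_Archimedean2 by blast
      have "real k * \<bar>lam x1\<bar> > Bd + norm x1" using k lx1 by (simp add: field_simps)
      moreover have "norm (y k) \<ge> real k * \<bar>lam x1\<bar> - norm x1"
      proof -
        have "norm ((real k * lam x1) *\<^sub>R e) \<le> norm (y k) + norm x1"
          using norm_triangle_ineq4[of "y k" x1] by (simp add: y_def)
        then show ?thesis using e1 by (simp add: abs_mult)
      qed
      moreover have "norm (y k) \<le> Bd" using Bd[OF yK] .
      ultimately show False by linarith
    qed
  qed

  define D where "D = d \<bullet> d - a^2"
  have Dexp: "(d - a *\<^sub>R e) \<bullet> (d - a *\<^sub>R e) = D"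
    by (simp add: D_def inner_diff_left inner_diff_right a_def ee inner_commute power2_eq_square)
  have Dpos: "D > 0" using npar Dexp by (metis inner_gt_zero_iff)
  define \<mu> where "\<mu> = F1 e"
  have mu_def': "\<mu> = lam1 * (1 + \<beta>1)" by (simp add: \<mu>_def F1_def e1 ee)
  define nu2 where "nu2 = lam2 * (1 + \<beta>2)"
  have F2d: "F2 d = nu2" by (simp add: F2_def nu2_def Bd_m m1 mm)
  have F1d: "F1 d = lam1 * D + \<mu> * a^2"
    by (simp add: F1_def D_def mu_def' power2_norm_eq_inner algebra_simps a_def)
  have nu2_eq: "nu2 = lam1 * D + \<mu> * a^2" using Feq[of d] F1d F2d by simp
  have P1ed: "P1 e d = a * \<mu>" by (simp add: P1_def mu_def' ee a_def inner_commute algebra_simps)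
  have P2ed: "P2 e d = b * nu2" by (simp add: P2_def nu2_def Bd_m mm b_def l_def algebra_simps)
  have aeq: "a * \<mu> = b * nu2" using Peq[of e d] P1ed P2ed by simp
  have mupos: "\<mu> > 0"
  proof (cases "b = 0")
    case True
    have "F2 e > 0"
      by (rule pos2[OF e0]) (use True in \<open>simp add: b_def l_def\<close>)
    then show ?thesis using Feq[of e] by (simp add: \<mu>_def)
  next
    case bnz: False
    show ?thesis
    proof (rule ccontr)
      assume "\<not> \<mu> > 0"
      then have mu0: "\<mu> \<le> 0" by simp
      have key: "\<mu> * (a*b) * (1 - a*b) = b^2 * lam1 * D"
      proof -
        have h: "a * \<mu> = b * (lam1 * D + \<mu> * a^2)" using aeq nu2_eq by simp
        have "\<mu> * (a*b) * (1 - a*b) = b * (a * \<mu>) - (a*b)^2 * \<mu>"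
          by (simp add: algebra_simps power2_eq_square)
        also have "\<dots> = b * (b * (lam1 * D + \<mu> * a^2)) - (a*b)^2 * \<mu>" by (simp only: h)
        also have "\<dots> = b^2 * lam1 * D" by (simp add: algebra_simps power2_eq_square)
        finally show ?thesis .
      qed
      have rhs: "b^2 * lam1 * D > 0" using bnz l1 Dpos by simp
      define \<tau> where "\<tau> = 4 * a * b - 2"
      have tau: "\<bar>\<tau>\<bar> \<ge> 2"
      proof -
        have "\<mu> * ((a*b) * (1 - a*b)) > 0" using key rhs by (simp add: mult.assoc)
        then have "(a*b) * (1 - a*b) < 0" using mu0 by (simp add: zero_less_mult_iff)
        then have "a*b < 0 \<or> a*b > 1" by (smt (verit) mult_nonneg_nonneg)
        then show ?thesis by (auto simp: \<tau>_def)
      qed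
      define t0 where "t0 = \<epsilon> / 2"
      have t0: "t0 > 0" using ep by (simp add: t0_def)
      have t0K: "t0 *\<^sub>R e \<in> K0" using ep e1 t0 by (auto simp: t0_def)
      define u where "u k = (hm ^^ k) (t0 *\<^sub>R e)" for k
      have uK: "u k \<in> K0" for k by (induction k) (simp_all add: u_def t0K presh)
      have hpq: "hm (p *\<^sub>R e + q *\<^sub>R d) = ((4*a*b - 1) * p + 2 * a * q) *\<^sub>R e + (-2 * b * p - q) *\<^sub>R d" for p q
      proof -
        have le: "l e = b" by (simp add: b_def)
        have "hm (p *\<^sub>R e + q *\<^sub>R d) = (p *\<^sub>R e + q *\<^sub>R d) + (4 * a * (p * b + q) - 2 * (p + q * a)) *\<^sub>R e
               - (2 * (p * b + q)) *\<^sub>R d"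
          unfolding hgen by (simp add: l_add l_scale le ld inner_add_left inner_add_right ee a_def inner_commute)
        also have "\<dots> = (p + (4 * a * (p * b + q) - 2 * (p + q * a))) *\<^sub>R e + (q - 2 * (p * b + q)) *\<^sub>R d"
          by (rule comb2)
        also have "\<dots> = ((4*a*b - 1) * p + 2 * a * q) *\<^sub>R e + (-2 * b * p - q) *\<^sub>R d"
          by (rule coef_eq) (simp_all add: algebra_simps)
        finally show ?thesis .
      qed
      have uspan: "\<exists>p q. u k = p *\<^sub>R e + q *\<^sub>R d" for k
      proof (induction k)
        case 0 then show ?case by (intro exI[of _ t0] exI[of _ 0]) (simp add: u_def)
      next
        case (Suc k)
        then obtain p q where "u k = p *\<^sub>R e + q *\<^sub>R d" by blast
        then have "u (Suc k) = hm (p *\<^sub>R e + q *\<^sub>R d)" by (simp add: u_def)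
        then show ?case using hpq by metis
      qed
      have hh: "hm (hm y) = \<tau> *\<^sub>R hm y - y" if "y = p *\<^sub>R e + q *\<^sub>R d" for y p q
      proof -
        have "hm (hm y) = ((4*a*b - 1) * ((4*a*b - 1) * p + 2 * a * q) + 2 * a * (-2 * b * p - q)) *\<^sub>R e
              + (-2 * b * ((4*a*b - 1) * p + 2 * a * q) - (-2 * b * p - q)) *\<^sub>R d"
          by (simp only: that hpq)
        also have "\<dots> = (\<tau> * ((4*a*b - 1) * p + 2 * a * q) - p) *\<^sub>R e + (\<tau> * (-2 * b * p - q) - q) *\<^sub>R d"
          by (rule coef_eq) (simp_all add: \<tau>_def algebra_simps)
        also have "\<dots> = \<tau> *\<^sub>R hm y - y"
          by (simp only: that hpq comb3)
        finally show ?thesis .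
      qed
      have urec: "u (Suc (Suc k)) = \<tau> *\<^sub>R u (Suc k) - u k" for k
      proof -
        obtain p q where "u k = p *\<^sub>R e + q *\<^sub>R d" using uspan by blast
        then show ?thesis using hh by (simp add: u_def)
      qed
      define dd where "dd = d - a *\<^sub>R e"
      define g where "g k = (u k \<bullet> dd) / (-2 * b * D * t0)" for k
      have den: "-2 * b * D * t0 \<noteq> 0" using bnz Dpos t0 by simp
      have g0: "g 0 = 0" by (simp add: g_def u_def dd_def inner_diff_right a_def ee inner_commute)
      have hedd: "hm e \<bullet> dd = -2 * b * D"
      proof -
        have "hm e = ((4*a*b - 1) * 1 + 2 * a * 0) *\<^sub>R e + (-2 * b * 1 - 0) *\<^sub>R d"
          by (metis hpq scaleR_one scaleR_zero_left add.right_neutral)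
        also have "\<dots> = (4*a*b - 1) *\<^sub>R e - (2 * b) *\<^sub>R d" by simp
        finally have he: "hm e = (4*a*b - 1) *\<^sub>R e - (2 * b) *\<^sub>R d" .
        show ?thesis unfolding he dd_def
          by (simp add: inner_diff_right inner_diff_left a_def ee inner_commute D_def algebra_simps power2_eq_square)
      qed
      have g1: "g 1 = 1"
        using hedd den by (simp add: g_def u_def hlin_scale)
      have grec: "g (Suc (Suc k)) = \<tau> * g (Suc k) - g k" for k
        using urec[of k] den by (simp add: g_def inner_diff_left diff_divide_distrib)
      have gk: "\<bar>g k\<bar> \<ge> real k" for k by (rule seq_growth[OF tau g0 g1 grec])
      have ddn: "norm dd > 0" using npar by (simp add: dd_def)
      have bnd: "\<bar>g k\<bar> \<le> Bd * norm dd / \<bar>2 * b * D * t0\<bar>" for k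
      proof -
        have "\<bar>u k \<bullet> dd\<bar> \<le> norm (u k) * norm dd" by (rule Cauchy_Schwarz_ineq2)
        also have "\<dots> \<le> Bd * norm dd" using Bd[OF uK] ddn by (simp add: mult_right_mono)
        finally show ?thesis using den by (simp add: g_def abs_mult divide_right_mono)
      qed
      obtain k :: nat where "real k > Bd * norm dd / \<bar>2 * b * D * t0\<bar>" using reals_Archimedean2 by blast
      then show False using gk[of k] bnd[of k] by linarith
    qed
  qed

  define s where "s = sqrt (\<mu> / lam1)"
  have sp: "s > 0" using mupos l1 by (simp add: s_def)
  have b1: "1 + \<beta>1 > 0" using mupos l1 mu_def' by (simp add: zero_less_mult_iff)
  have s2: "s^2 = 1 + \<beta>1" using b1 l1 mu_def' by (simp add: s_def)
  define U where "U x = x + ((s - 1) * (x \<bullet> e)) *\<^sub>R e" for x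
  define Ui where "Ui x = x + ((1/s - 1) * (x \<bullet> e)) *\<^sub>R e" for x
  have Ue: "U x \<bullet> e = s * (x \<bullet> e)" for x by (simp add: U_def inner_add_left ee algebra_simps)
  have Uie: "Ui x \<bullet> e = (x \<bullet> e) / s" for x using sp by (simp add: Ui_def inner_add_left ee field_simps)
  have UUi: "U (Ui x) = x" for x
  proof -
    have "U (Ui x) = Ui x + ((s - 1) * ((x \<bullet> e) / s)) *\<^sub>R e" by (simp only: U_def Uie)
    also have "\<dots> = x + (((1/s - 1) * (x \<bullet> e)) + (s - 1) * ((x \<bullet> e) / s)) *\<^sub>R e"
      by (simp only: Ui_def scaleR_add_left add.assoc)
    also have "((1/s - 1) * (x \<bullet> e)) + (s - 1) * ((x \<bullet> e) / s) = 0" using sp by (simp add: field_simps)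
    finally show ?thesis by simp
  qed
  have UiU: "Ui (U x) = x" for x
  proof -
    have "Ui (U x) = U x + ((1/s - 1) * (s * (x \<bullet> e))) *\<^sub>R e" by (simp only: Ui_def Ue)
    also have "\<dots> = x + (((s - 1) * (x \<bullet> e)) + (1/s - 1) * (s * (x \<bullet> e))) *\<^sub>R e"
      by (simp only: U_def scaleR_add_left add.assoc)
    also have "((s - 1) * (x \<bullet> e)) + (1/s - 1) * (s * (x \<bullet> e)) = 0" using sp by (simp add: field_simps)
    finally show ?thesis by simp
  qed
  have linU: "linear U" by (rule linearI) (simp_all add: U_def inner_add_left algebra_simps)
  have linUi: "linear Ui" by (rule linearI) (simp_all add: Ui_def inner_add_left algebra_simps)
  have UU: "U x \<bullet> U y = x \<bullet> y + \<beta>1 * (x \<bullet> e) * (y \<bullet> e)" for x y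
  proof -
    have "U x \<bullet> U y = x \<bullet> y + (2 * (s - 1) + (s - 1)^2) * (x \<bullet> e) * (y \<bullet> e)"
      by (simp add: U_def inner_add_left inner_add_right ee inner_commute algebra_simps power2_eq_square)
    also have "2 * (s - 1) + (s - 1)^2 = \<beta>1" using s2 by (simp add: algebra_simps power2_eq_square)
    finally show ?thesis .
  qed
  have F1U: "F1 x = lam1 * (norm (U x))^2" for x
    unfolding F1_def power2_norm_eq_inner UU by (simp add: power2_eq_square)
  have P1U: "P1 x d = lam1 * (U x \<bullet> U d)" for x by (simp add: P1_def UU)
  have P2d: "P2 x d = nu2 * l x" for x by (simp add: P2_def nu2_def Bd_m mm l_def algebra_simps)
  have nu2pos: "nu2 > 0" using nu2_eq l1 Dpos mupos by (simp add: add_pos_nonneg)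
  define K' where "K' = U ` K0"
  have memK': "z \<in> K' \<longleftrightarrow> Ui z \<in> K0" for z
    unfolding K'_def by (metis UUi UiU image_iff)
  have d0: "d \<noteq> 0" using npar by (auto simp: a_def)
  have Ud0: "U d \<noteq> 0" using d0 UiU by (metis linear_0[OF linUi])
  define dh where "dh = U d /\<^sub>R norm (U d)"
  have dh1: "norm dh = 1" using Ud0 by (simp add: dh_def)
  have edh: "\<bar>e \<bullet> dh\<bar> < 1"
  proof -
    have orth: "(d - a *\<^sub>R e) \<bullet> e = 0" by (simp add: inner_diff_left a_def ee)
    have dec: "U d = (s * a) *\<^sub>R e + (d - a *\<^sub>R e)" by (simp add: U_def a_def algebra_simps)
    have "U d \<bullet> U d = (s*a)^2 + D"
      unfolding dec using orth Dexp
      by (simp add: inner_add_left inner_add_right ee inner_commute power2_eq_square)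
    moreover have "U d \<bullet> e = s * a" by (simp add: Ue a_def)
    ultimately have lt: "(U d \<bullet> e)^2 < (norm (U d))^2" using Dpos by (simp add: power2_norm_eq_inner)
    have "\<bar>e \<bullet> dh\<bar> = \<bar>U d \<bullet> e\<bar> / norm (U d)" by (simp add: dh_def inner_commute abs_mult divide_inverse_commute)
    moreover have "\<bar>U d \<bullet> e\<bar> < norm (U d)" using power2_less_imp_less[of "\<bar>U d \<bullet> e\<bar>" "norm (U d)"] lt by simp
    ultimately show ?thesis using Ud0 by simp
  qed
  have inv_e': "y' \<in> K'" if "x' \<in> K'" "y' \<bullet> e = x' \<bullet> e" "norm y' = norm x'" for x' y'
  proof -
    define x where "x = Ui x'"
    define y where "y = Ui y'"
    have xK: "x \<in> K0" using that memK' by (simp add: x_def)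
    have ye: "y \<bullet> e = x \<bullet> e" using that by (simp add: x_def y_def Uie)
    have "F1 y = F1 x" using that by (simp add: F1U x_def y_def UUi)
    then have "(norm y)^2 = (norm x)^2" using ye l1 by (simp add: F1_def)
    then have "norm y = norm x" by (simp add: power2_eq_iff_nonneg)
    then have "y \<in> K0" using rev0[OF xK ye] by simp
    then show ?thesis using memK' by (simp add: y_def)
  qed
  have inv_d': "y' \<in> K'" if "x' \<in> K'" "y' \<bullet> dh = x' \<bullet> dh" "norm y' = norm x'" for x' y'
  proof -
    define x where "x = Ui x'"
    define y where "y = Ui y'"
    have xK: "x \<in> K0" using that memK' by (simp add: x_def)
    have "y' \<bullet> U d = x' \<bullet> U d" using that(2) Ud0 by (simp add: dh_def)
    then have "U y \<bullet> U d = U x \<bullet> U d" by (simp add: x_def y_def UUi)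
    then have "P1 y d = P1 x d" by (simp add: P1U)
    then have "P2 y d = P2 x d" using Peq by simp
    then have ly: "l y = l x" using nu2pos by (simp add: P2d)
    have "F1 y = F1 x" using that by (simp add: F1U x_def y_def UUi)
    then have "F2 y = F2 x" using Feq by simp
    then have "(norm (B y))^2 = (norm (B x))^2" using ly l2 by (simp add: F2_def l_def)
    then have nB: "norm (B y) = norm (B x)" by (simp add: power2_eq_iff_nonneg)
    have "y \<in> K0" by (rule rev1[OF xK]) (use ly nB in \<open>simp_all add: l_def\<close>)
    then show ?thesis using memK' by (simp add: y_def)
  qed
  have bijU: "bij U" by (metis UUi UiU bij_betw_byWitness subset_UNIV)
  have cK': "compact K'" unfolding K'_def
    by (rule compact_continuous_image[OF linear_continuous_on[OF linear_conv_bounded_linear[THEN iffD1, OF linU]] cK])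
  have cvx': "convex K'" unfolding K'_def by (rule convex_linear_image[OF linU cvx])
  have int0': "0 \<in> interior K'"
    unfolding K'_def interior_bijective_linear_image[OF linU bijU] using int0 linear_0[OF linU] by force
  have "\<exists>R>0. K' = cball 0 R"
    by (rule ball_lemma[OF dim cK' cvx' int0' e1 dh1 edh]) (use inv_e' inv_d' in blast)+
  then obtain R where R: "R > 0" "K' = cball 0 R" by blast
  show "ellipsoid K0"
    unfolding ellipsoid_def
  proof (intro exI conjI)
    define T where "T x = Ui (R *\<^sub>R x)" for x
    show "linear T" unfolding T_def by (rule linear_compose[OF linear_scaleR linUi, unfolded o_def])
    show "bij T"
    proof (rule bij_betw_byWitness[where f' = "\<lambda>z. (1/R) *\<^sub>R U z"])
      show "\<forall>x\<in>UNIV. (1/R) *\<^sub>R U (T x) = x" using R by (simp add: T_def UUi)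
      show "\<forall>y\<in>UNIV. T ((1/R) *\<^sub>R U y) = y" using R by (simp add: T_def UiU)
    qed auto
    show "K0 = (\<lambda>x. T x + 0) ` cball 0 1"
    proof (rule set_eqI, rule iffI)
      fix x assume xK: "x \<in> K0"
      then have "U x \<in> cball 0 R" using R memK' UiU by metis
      then have "(1/R) *\<^sub>R U x \<in> cball 0 1" using R by (simp add: divide_simps)
      moreover have "x = T ((1/R) *\<^sub>R U x) + 0" using R by (simp add: T_def UiU)
      ultimately show "x \<in> (\<lambda>x. T x + 0) ` cball 0 1" by blast
    next
      fix x assume "x \<in> (\<lambda>x. T x + 0) ` cball 0 1"
      then obtain z where z: "z \<in> cball 0 1" "x = Ui (R *\<^sub>R z)" by (auto simp: T_def)
      have "R *\<^sub>R z \<in> cball 0 R" using z R by (simp add: mult_left_le)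
      then show "x \<in> K0" using R memK' z by metis
    qed
  qed
qed



lemma axis_unpack:
  fixes K L :: "'a::euclidean_space set"
  assumes ax: "axis_of_revolution K L"
  shows "\<exists>e. norm e = 1 \<and> orthogonal_comp L = {x. x \<bullet> e = 0}
     \<and> (\<forall>x y. x \<in> K \<longrightarrow> y \<bullet> e = x \<bullet> e \<longrightarrow> norm y = norm x \<longrightarrow> y \<in> K)
     \<and> (0 \<in> K \<longrightarrow> (\<exists>r\<ge>0. \<forall>x. x \<bullet> e = 0 \<longrightarrow> (x \<in> K \<longleftrightarrow> norm x \<le> r)))"
proof -
  have sub: "subspace L" and d1: "dim L = 1"
    and sec: "\<And>c. c \<in> L \<Longrightarrow> K \<inter> ((\<lambda>x. c + x) ` orthogonal_comp L) = {} \<or>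
        (\<exists>r\<ge>0. K \<inter> ((\<lambda>x. c + x) ` orthogonal_comp L) = cball c r \<inter> ((\<lambda>x. c + x) ` orthogonal_comp L))"
    using ax unfolding axis_of_revolution_def Let_def by auto
  obtain Bs where Bs: "Bs \<subseteq> L" "independent Bs" "L \<subseteq> span Bs" "card Bs = dim L"
    using basis_exists by blast
  then obtain u where u: "Bs = {u}" using d1 card_1_singletonE by metis
  have u0: "u \<noteq> 0" using Bs(2) u dependent_zero by blast
  have "span {u} = L" by (rule span_subspace[OF _ _ sub]) (use Bs u in auto)
  then have Lu: "L = span {u}" by simp
  define e where "e = u /\<^sub>R norm u"
  have e1: "norm e = 1" using u0 by (simp add: e_def)
  have ee: "e \<bullet> e = 1" using e1 by (simp add: norm_eq_1)
  have Le: "L = range (\<lambda>k. k *\<^sub>R e)"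
  proof -
    have "range (\<lambda>k. k *\<^sub>R u) = range (\<lambda>k. k *\<^sub>R e)"
    proof (rule set_eqI, rule iffI)
      fix y assume "y \<in> range (\<lambda>k. k *\<^sub>R u)"
      then obtain k where "y = k *\<^sub>R u" by blast
      then have "y = (k * norm u) *\<^sub>R e" using u0 by (simp add: e_def)
      then show "y \<in> range (\<lambda>k. k *\<^sub>R e)" by blast
    next
      fix y assume "y \<in> range (\<lambda>k. k *\<^sub>R e)"
      then obtain k where "y = k *\<^sub>R e" by blast
      then have "y = (k / norm u) *\<^sub>R u" by (simp add: e_def divide_inverse)
      then show "y \<in> range (\<lambda>k. k *\<^sub>R u)" by blast
    qed
    then show ?thesis using Lu span_singleton[of u] by simp
  qed
  have oc: "orthogonal_comp L = {x. x \<bullet> e = 0}"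
  proof (rule set_eqI)
    fix x
    have "(\<forall>k::real. (k *\<^sub>R e) \<bullet> x = 0) \<longleftrightarrow> x \<bullet> e = 0"
      by (metis inner_commute inner_scaleR_left mult_zero_right scaleR_one)
    then show "x \<in> orthogonal_comp L \<longleftrightarrow> x \<in> {x. x \<bullet> e = 0}"
      unfolding orthogonal_comp_def orthogonal_def Le by auto
  qed
  have A_mem: "z \<in> (\<lambda>x. c + x) ` orthogonal_comp L \<longleftrightarrow> (z - c) \<bullet> e = 0" for z c
    unfolding oc by (auto simp: image_iff intro: exI[of _ "z - c"])
  have rev: "y \<in> K" if "x \<in> K" "y \<bullet> e = x \<bullet> e" "norm y = norm x" for x y
  proof -
    define c where "c = (x \<bullet> e) *\<^sub>R e"
    have cL: "c \<in> L" unfolding Le c_def by (rule rangeI)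
    define A where "A = (\<lambda>x. c + x) ` orthogonal_comp L"
    have xA: "x \<in> A" unfolding A_def A_mem by (simp add: c_def inner_diff_left ee)
    have yA: "y \<in> A" unfolding A_def A_mem using that(2) by (simp add: c_def inner_diff_left ee)
    have ne: "K \<inter> A \<noteq> {}" using xA that(1) by blast
    have "K \<inter> A = {} \<or> (\<exists>r\<ge>0. K \<inter> A = cball c r \<inter> A)" using sec[OF cL] unfolding A_def .
    then obtain r where r: "K \<inter> A = cball c r \<inter> A" using ne by blast
    have "x \<in> cball c r" using r xA that(1) by blast
    moreover have "dist c y = dist c x"
    proof -
      have "(c - x) \<bullet> (c - x) = x \<bullet> x - (x \<bullet> e)^2"
        by (simp add: c_def inner_diff_left inner_diff_right ee inner_commute power2_eq_square)
      moreover have "(c - y) \<bullet> (c - y) = y \<bullet> y - (x \<bullet> e)^2"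
        using that(2) by (simp add: c_def inner_diff_left inner_diff_right ee inner_commute power2_eq_square)
      moreover have "x \<bullet> x = y \<bullet> y" using that(3) by (simp add: norm_eq_sqrt_inner)
      ultimately show ?thesis by (simp add: dist_norm norm_eq_sqrt_inner)
    qed
    ultimately have "y \<in> cball c r" by simp
    then show ?thesis using r yA by blast
  qed
  have sec0: "\<exists>r\<ge>0. \<forall>x. x \<bullet> e = 0 \<longrightarrow> (x \<in> K \<longleftrightarrow> norm x \<le> r)" if "0 \<in> K"
  proof -
    have zL: "0 \<in> L" using sub by (simp add: subspace_0)
    define A0 where "A0 = (\<lambda>x. 0 + x) ` orthogonal_comp L"
    have "0 \<in> K \<inter> A0" using that by (simp add: A0_def oc)
    then have ne: "K \<inter> A0 \<noteq> {}" by blast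
    have "K \<inter> A0 = {} \<or> (\<exists>r\<ge>0. K \<inter> A0 = cball 0 r \<inter> A0)" using sec[OF zL] unfolding A0_def .
    then obtain r where r: "r \<ge> 0" "K \<inter> A0 = cball 0 r \<inter> A0" using ne by blast
    show ?thesis
    proof (intro exI[of _ r] conjI allI impI)
      fix x assume "x \<bullet> e = 0"
      then have "x \<in> A0" by (simp add: A0_def oc)
      then have "x \<in> K \<longleftrightarrow> x \<in> cball 0 r" using r(2) by blast
      then show "x \<in> K \<longleftrightarrow> norm x \<le> r" by simp
    qed (use r in auto)
  qed
  show ?thesis using e1 oc rev sec0 by blast
qed

lemma sec_pos:
  fixes K :: "'a::euclidean_space set"
  assumes dim: "DIM('a) \<ge> 3" and int0: "0 \<in> interior K"
    and sec: "\<And>x. x \<bullet> e = 0 \<Longrightarrow> (x \<in> K \<longleftrightarrow> norm x \<le> r)"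
  shows "r > 0"
proof -
  obtain \<epsilon> where ep: "\<epsilon> > 0" "ball 0 \<epsilon> \<subseteq> K" using int0 by (meson mem_interior)
  obtain w where w: "w \<noteq> 0" "w \<bullet> e = 0" "w \<bullet> e = 0" using exists_orth2[OF dim] by blast
  define v where "v = (\<epsilon> / 2 / norm w) *\<^sub>R w"
  have nv: "norm v = \<epsilon> / 2" using w ep by (simp add: v_def)
  have "v \<in> K" using ep nv by auto
  moreover have "v \<bullet> e = 0" using w by (simp add: v_def)
  ultimately have "norm v \<le> r" using sec by blast
  then show ?thesis using nv ep by simp
qed

lemma sym_int0:
  fixes K :: "'a::euclidean_space set"
  assumes "symmetric_convex_body K"
  shows "0 \<in> interior K"
proof -
  have cvx: "convex K" and ne: "interior K \<noteq> {}" and sym: "\<And>x. x \<in> K \<Longrightarrow> - x \<in> K"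
    using assms unfolding symmetric_convex_body_def by auto
  obtain x where x: "x \<in> interior K" using ne by blast
  have "uminus ` K = K" using sym by (auto simp: image_iff) (metis minus_minus sym)
  then have "- x \<in> interior K" using x interior_negations[of K] by (metis image_eqI)
  then have "(1/2) *\<^sub>R x + (1/2) *\<^sub>R (- x) \<in> interior K"
    using x convexD[OF convex_interior[OF cvx], of x "-x" "1/2" "1/2"] by simp
  then show ?thesis by simp
qed

theorem mainTheorem9:
  fixes K :: "'a::euclidean_space set"
  assumes "DIM('a) \<ge> 3"
    and "affine_symmetric_body_of_revolution K"
    and "hyperplane_of_revolution K H1"
    and "hyperplane_of_revolution K H2"
    and "H1 \<noteq> H2"
  shows "ellipsoid K"
proof -
  note dim = assms(1)
  obtain T :: "'a \<Rightarrow> 'a" and K0 L where T: "linear T" "bij T" and sK0: "symmetric_convex_body K0" and axL: "axis_of_revolution K0 L"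
    and KT: "K = T ` K0" and H1: "H1 = T ` orthogonal_comp L"
    using assms(3) unfolding hyperplane_of_revolution_def by blast
  obtain S :: "'a \<Rightarrow> 'a" and K1 M where S: "linear S" "bij S" and sK1: "symmetric_convex_body K1" and axM: "axis_of_revolution K1 M"
    and KS: "K = S ` K1" and H2: "H2 = S ` orthogonal_comp M"
    using assms(4) unfolding hyperplane_of_revolution_def by blast
  obtain e where e1: "norm e = 1" and ocL: "orthogonal_comp L = {x. x \<bullet> e = 0}"
    and rev0: "\<And>x y. x \<in> K0 \<Longrightarrow> y \<bullet> e = x \<bullet> e \<Longrightarrow> norm y = norm x \<Longrightarrow> y \<in> K0"
    and sec0': "0 \<in> K0 \<Longrightarrow> (\<exists>r\<ge>0. \<forall>x. x \<bullet> e = 0 \<longrightarrow> (x \<in> K0 \<longleftrightarrow> norm x \<le> r))"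
    using axis_unpack[OF axL] by blast
  obtain m where m1: "norm m = 1" and ocM: "orthogonal_comp M = {x. x \<bullet> m = 0}"
    and revM: "\<And>x y. x \<in> K1 \<Longrightarrow> y \<bullet> m = x \<bullet> m \<Longrightarrow> norm y = norm x \<Longrightarrow> y \<in> K1"
    and secM': "0 \<in> K1 \<Longrightarrow> (\<exists>r\<ge>0. \<forall>x. x \<bullet> m = 0 \<longrightarrow> (x \<in> K1 \<longleftrightarrow> norm x \<le> r))"
    using axis_unpack[OF axM] by blast
  have int0: "0 \<in> interior K0" by (rule sym_int0[OF sK0])
  have int1: "0 \<in> interior K1" by (rule sym_int0[OF sK1])
  obtain r0 where sec0: "\<And>x. x \<bullet> e = 0 \<Longrightarrow> (x \<in> K0 \<longleftrightarrow> norm x \<le> r0)"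
    using sec0' int0 interior_subset by blast
  obtain r1' where secM: "\<And>x. x \<bullet> m = 0 \<Longrightarrow> (x \<in> K1 \<longleftrightarrow> norm x \<le> r1')"
    using secM' int1 interior_subset by blast
  have r0: "r0 > 0" by (rule sec_pos[OF dim int0 sec0])
  have r1: "r1' > 0" by (rule sec_pos[OF dim int1 secM])
  define Ti where "Ti = inv T"
  define Si where "Si = inv S"
  have TTi: "T (Ti y) = y" for y using T(2) by (simp add: Ti_def bij_is_surj surj_f_inv_f)
  have TiT: "Ti (T y) = y" for y using T(2) by (simp add: Ti_def bij_is_inj inv_f_f)
  have SSi: "S (Si y) = y" for y using S(2) by (simp add: Si_def bij_is_surj surj_f_inv_f)
  have SiS: "Si (S y) = y" for y using S(2) by (simp add: Si_def bij_is_inj inv_f_f)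
  have linTi: "linear Ti" unfolding Ti_def by (rule inj_linear_imp_inv_linear[OF T(1) bij_is_inj[OF T(2)]])
  have linSi: "linear Si" unfolding Si_def by (rule inj_linear_imp_inv_linear[OF S(1) bij_is_inj[OF S(2)]])
  define A where "A z = Ti (S z)" for z
  define B where "B x = Si (T x)" for x
  have linA: "linear A" unfolding A_def using linear_compose[OF S(1) linTi] by (simp add: o_def)
  have linB: "linear B" unfolding B_def using linear_compose[OF T(1) linSi] by (simp add: o_def)
  have BA: "B (A z) = z" for z by (simp add: A_def B_def TTi SiS)
  have AB: "A (B x) = x" for x by (simp add: A_def B_def SSi TiT)
  have memB: "x \<in> K0 \<longleftrightarrow> B x \<in> K1" for x
  proof
    assume "x \<in> K0"
    then have "T x \<in> S ` K1" using KT KS by blast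
    then obtain z where "z \<in> K1" "T x = S z" by blast
    then show "B x \<in> K1" by (simp add: B_def SiS)
  next
    assume "B x \<in> K1"
    then have "S (B x) \<in> T ` K0" using KT KS by blast
    then have "T x \<in> T ` K0" by (simp add: B_def SSi)
    then show "x \<in> K0" using bij_is_inj[OF T(2)] by (simp add: inj_image_mem_iff)
  qed
  have rev1: "y \<in> K0" if "x \<in> K0" "B y \<bullet> m = B x \<bullet> m" "norm (B y) = norm (B x)" for x y
    using revM[of "B x" "B y"] that memB by blast
  have sec1: "x \<in> K0 \<longleftrightarrow> norm (B x) \<le> r1'" if "B x \<bullet> m = 0" for x
    using secM[OF that] memB by blast
  have hyp: "{x. x \<bullet> e = 0} \<noteq> {x. B x \<bullet> m = 0}"
  proof
    assume eq: "{x. x \<bullet> e = 0} = {x. B x \<bullet> m = 0}"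
    have "T ` {x. B x \<bullet> m = 0} = S ` {z. z \<bullet> m = 0}"
    proof (rule set_eqI, rule iffI)
      fix y assume "y \<in> T ` {x. B x \<bullet> m = 0}"
      then obtain x where x: "B x \<bullet> m = 0" "y = T x" by blast
      have "y = S (B x)" using x by (simp add: B_def SSi)
      then show "y \<in> S ` {z. z \<bullet> m = 0}" using x by blast
    next
      fix y assume "y \<in> S ` {z. z \<bullet> m = 0}"
      then obtain z where z: "z \<bullet> m = 0" "y = S z" by blast
      have "y = T (A z)" using z by (simp add: A_def TTi)
      moreover have "B (A z) \<bullet> m = 0" using z by (simp add: BA)
      ultimately show "y \<in> T ` {x. B x \<bullet> m = 0}" by blast
    qed
    then have "H1 = H2" using H1 H2 ocL ocM eq by simp
    then show False using assms(5) by simp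
  qed
  have cK0: "compact K0" and cvx0: "convex K0" using sK0 unfolding symmetric_convex_body_def by auto
  have ell0: "ellipsoid K0"
    apply (rule core[OF dim e1 m1 linA linB BA AB cK0 cvx0 int0 _ _ _ r0 _ r1 hyp])
       apply (fact rev0)
      apply (fact rev1)
     apply (fact sec0)
    apply (fact sec1)
    done
  then obtain T' :: "'a \<Rightarrow> 'a" and a where T': "linear T'" "bij T'" "K0 = (\<lambda>x. T' x + a) ` cball 0 1"
    unfolding ellipsoid_def by blast
  show ?thesis
    unfolding ellipsoid_def
  proof (intro exI conjI)
    show "linear (T \<circ> T')" by (rule linear_compose[OF T'(1) T(1)])
    show "bij (T \<circ> T')" by (rule bij_comp[OF T'(2) T(2)])
    show "K = (\<lambda>x. (T \<circ> T') x + T a) ` cball 0 1"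
      unfolding KT T'(3) image_image by (simp add: linear_add[OF T(1)])
  qed
qed

end
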